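(* Let $f_0,f_2>0$, $\alpha>0$, let $0<\Lambda_1<\Lambda_{in}$, and let $\mathfrak{c}:[\Lambda_1,\Lambda_{in}]\to\mathbb{R}$ be continuous with $192 f_2\Lambda^2-2f_0\mathfrak{c}(\Lambda)\neq 0$ for all $\Lambda$. Define $$G_{\rm eff}(\Lambda)=\frac{3\pi}{192 f_2\Lambda^2-2f_0\,\mathfrak{c}(\Lambda)} .$$ Let $h:[\Lambda_1,\Lambda_{in}]\to\mathbb{R}$ be continuous with $1-\tfrac{4\pi}{3}G_{\rm eff}(\Lambda)h(\Lambda)\neq 0$, and define $G_{{\rm eff},H}(\Lambda)=\dfrac{G_{\rm eff}(\Lambda)}{1-\frac{4\pi}{3}G_{\rm eff}(\Lambda)h(\Lambda)}$. Use the time–energy relation $\Lambda=e^{-\alpha t}$, i.e. $t=-\alpha^{-1}\log\Lambda$, and for a function $\mathcal{M}$ of $t$ write $\mathcal{M}(\Lambda):=\mathcal{M}(t)$ at $t=-\alpha^{-1}\log\Lambda$. (a) (No gravitational memory.) If $\mathcal{M}>0$ is differentiable on the corresponding time interval and satisfies $\dfrac{d\mathcal{M}}{dt}=-\big(G_{\rm eff}(e^{-\alpha t})\,\mathcal{M}(t)\big)^{-2}$, then for every $\Lambda\in[\Lambda_1,\Lambda_{in}]$ $$\mathcal{M}(\Lambda)=\sqrt[3]{\mathcal{M}^3(\Lambda_{in})-\frac{1}{3\alpha\pi^2}\int_\Lambda^{\Lambda_{in}}\frac{(192 f_2x^2-2f_0\mathfrak{c}(x))^2}{x}\,dx}.$$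 (b) (Gravitational memory.) If $\mathcal{M}>0$ is differentiable on the corresponding time interval and satisfies $\dfrac{d\mathcal{M}}{dt}=-\big(G_{{\rm eff},H}(e^{-\alpha t})\,\mathcal{M}(t)\big)^{-2}$, then for every $\Lambda\in[\Lambda_1,\Lambda_{in}]$ $$\mathcal{M}(\Lambda)=\sqrt[3]{\mathcal{M}^3(\Lambda_{in})-\frac{3}{\alpha}\int_\Lambda^{\Lambda_{in}}\frac{\big(1-\frac{4\pi}{3}G_{\rm eff}(x)h(x)\big)^2}{x\,G_{\rm eff}(x)^2}\,dx}.$$
   Context: Physical interpretation: $\mathcal{M}$ is the mass of a primordial black hole evaporating by Hawking radiation during the inflationary epoch ($a(t)=e^{\alpha t}$, energy $\Lambda=1/a(t)$), $\Lambda_{in}$ the energy at which this epoch begins. $G_{\rm eff}$ is the effective gravitational constant of the noncommutative geometry model, with $\mathfrak{c}(\Lambda)=\mathrm{Tr}(MM^\dagger)$ the renormalization-group-running trace of the squared Majorana mass matrix, and $h(\Lambda)$ plays the role of $|H|^2$ for a (nearly constant) Higgs field $H$. $G_{{\rm eff},H}$ is the effective gravitational constant modified by the conformal coupling of gravity to the Higgs field. *)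

theory Defs
  imports "HOL-Analysis.Analysis"
begin

definition Geff :: "real \<Rightarrow> real \<Rightarrow> (real \<Rightarrow> real) \<Rightarrow> real \<Rightarrow> real" where
  "Geff f0 f2 c \<Lambda> = 3 * pi / (192 * f2 * \<Lambda>\<^sup>2 - 2 * f0 * c \<Lambda>)"

definition GeffH :: "real \<Rightarrow> real \<Rightarrow> (real \<Rightarrow> real) \<Rightarrow> (real \<Rightarrow> real) \<Rightarrow> real \<Rightarrow> real" where
  "GeffH f0 f2 c h \<Lambda> = Geff f0 f2 c \<Lambda> / (1 - 4 * pi / 3 * Geff f0 f2 c \<Lambda> * h \<Lambda>)"

definition time_of :: "real \<Rightarrow> real \<Rightarrow> real" where
  "time_of \<alpha> \<Lambda> = - ln \<Lambda> / \<alpha>"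

end

theory Submission imports Defs begin

lemma key:
  fixes f M :: "real \<Rightarrow> real" and a b \<alpha> k :: real
  assumes \<alpha>: "\<alpha> > 0" and a: "0 < a" and ab: "a < b"
    and fc: "continuous_on {a..b} f"
    and der: "\<forall>t\<in>{time_of \<alpha> b..time_of \<alpha> a}. M t > 0 \<and>
       (M has_real_derivative F (exp (- \<alpha> * t)) (M t))
         (at t within {time_of \<alpha> b..time_of \<alpha> a})"
    and FF: "\<forall>x\<in>{a..b}. \<forall>m>0. F x m = - (k * \<alpha> / 3) * f x * x / m\<^sup>2"
    and L: "L \<in> {a..b}"
  shows "M (time_of \<alpha> L) = root 3 ((M (time_of \<alpha> b))^3 - k * integral {L..b} f)"
proof -
  define T where "T = {time_of \<alpha> b..time_of \<alpha> a}"
  define g where "g t = exp (- \<alpha> * t)" for t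
  have g_time: "g (time_of \<alpha> x) = x" if "x > 0" for x
    using that \<alpha> by (simp add: g_def time_of_def)
  have gT: "g t \<in> {a..b}" if "t \<in> T" for t
  proof -
    have "- ln b / \<alpha> \<le> t" "t \<le> - ln a / \<alpha>" using that by (auto simp: T_def time_of_def)
    hence "- ln b \<le> \<alpha> * t" "\<alpha> * t \<le> - ln a" using \<alpha> by (auto simp: field_simps)
    hence "ln a \<le> - \<alpha> * t" "- \<alpha> * t \<le> ln b" by auto
    hence "exp (ln a) \<le> g t" "g t \<le> exp (ln b)" unfolding g_def by auto
    thus ?thesis using a ab by auto
  qed
  define I where "I u = integral {a..b} f - integral {a..u} f" for u
  have I_eq: "I u = integral {u..b} f" if "u \<in> {a..b}" for u
  proof -
    have "integral {a..u} f + integral {u..b} f = integral {a..b} f"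
      using Henstock_Kurzweil_Integration.integral_combine[where a=a and c=u and b=b and f=f] integrable_continuous_real[OF fc] that by auto
    thus ?thesis unfolding I_def by simp
  qed
  have Ider: "(I has_field_derivative - f u) (at u within {a..b})" if "u \<in> {a..b}" for u
  proof -
    have "((\<lambda>u. integral {a..u} f) has_vector_derivative f u) (at u within {a..b})"
      by (rule integral_has_vector_derivative[OF fc that])
    hence "((\<lambda>u. integral {a..u} f) has_field_derivative f u) (at u within {a..b})"
      by (simp add: has_real_derivative_iff_has_vector_derivative)
    hence "((\<lambda>u. integral {a..b} f - integral {a..u} f) has_field_derivative 0 - f u) (at u within {a..b})"
      by (intro derivative_intros) auto
    thus ?thesis unfolding I_def by simp
  qed
  define H where "H t = (M t)^3 + k * I (g t)" for t
  have "(H has_field_derivative 0) (at t within T)" if t: "t \<in> T" for t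
  proof -
    have Mt: "M t > 0" and dM: "(M has_real_derivative (- (k * \<alpha> / 3) * f (g t) * g t / (M t)\<^sup>2)) (at t within T)"
    proof -
      have Mt: "M t > 0" and d0: "(M has_real_derivative F (g t) (M t)) (at t within T)"
        using der t unfolding T_def g_def by auto
      have "F (g t) (M t) = - (k * \<alpha> / 3) * f (g t) * g t / (M t)\<^sup>2"
        using FF gT[OF t] Mt by blast
      thus "M t > 0" "(M has_real_derivative (- (k * \<alpha> / 3) * f (g t) * g t / (M t)\<^sup>2)) (at t within T)"
        using Mt d0 by auto
    qed
    have dg: "(g has_field_derivative (- \<alpha> * g t)) (at t within T)"
      unfolding g_def by (auto intro!: derivative_eq_intros)
    have dI0: "(I has_field_derivative - f (g t)) (at (g t) within g ` T)"
      by (rule DERIV_subset[OF Ider[OF gT[OF t]]]) (auto intro: gT)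
    have dIg: "(I \<circ> g has_field_derivative - f (g t) * (- \<alpha> * g t)) (at t within T)"
      by (rule DERIV_image_chain[OF dI0 dg])
    have "(H has_field_derivative (3 * (M t)^2 * (- (k * \<alpha> / 3) * f (g t) * g t / (M t)\<^sup>2)
            + k * (- f (g t) * (- \<alpha> * g t)))) (at t within T)"
      unfolding H_def using dIg dM
      by (auto intro!: derivative_eq_intros simp: o_def)
    moreover have "3 * (M t)^2 * (- (k * \<alpha> / 3) * f (g t) * g t / (M t)\<^sup>2)
            + k * (- f (g t) * (- \<alpha> * g t)) = 0" using Mt by (simp add: field_simps power2_eq_square)
    ultimately show ?thesis by simp
  qed
  then obtain C where C: "\<forall>t\<in>T. H t = C"
    using has_field_derivative_zero_constant[of T H] by (auto simp: T_def)
  have tb: "time_of \<alpha> b \<in> T" and tL: "time_of \<alpha> L \<in> T"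
    using L a ab \<alpha> by (auto simp: T_def time_of_def divide_right_mono)
  have "H (time_of \<alpha> L) = H (time_of \<alpha> b)" using C tb tL by auto
  moreover have "I b = 0" using I_eq[of b] ab by simp
  ultimately have "(M (time_of \<alpha> L))^3 = (M (time_of \<alpha> b))^3 - k * integral {L..b} f"
    unfolding H_def using g_time[of L] g_time[of b] L a ab I_eq[OF L] by auto
  moreover have "M (time_of \<alpha> L) > 0" using der tL unfolding T_def by auto
  ultimately show ?thesis by (metis less_imp_le real_root_power_cancel zero_less_numeral)
qed

theorem proposition4p9:
  fixes f0 f2 \<alpha> \<Lambda>1 \<Lambda>in :: real and c h :: "real \<Rightarrow> real"
  assumes f0: "f0 > 0" and f2: "f2 > 0" and \<alpha>: "\<alpha> > 0"
    and L1: "0 < \<Lambda>1" and L1in: "\<Lambda>1 < \<Lambda>in"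
    and c_cont: "continuous_on {\<Lambda>1..\<Lambda>in} c"
    and c_nz: "\<forall>\<Lambda>\<in>{\<Lambda>1..\<Lambda>in}. 192 * f2 * \<Lambda>\<^sup>2 - 2 * f0 * c \<Lambda> \<noteq> 0"
    and h_cont: "continuous_on {\<Lambda>1..\<Lambda>in} h"
    and h_nz: "\<forall>\<Lambda>\<in>{\<Lambda>1..\<Lambda>in}. 1 - 4 * pi / 3 * Geff f0 f2 c \<Lambda> * h \<Lambda> \<noteq> 0"
  shows
    "(\<forall>M :: real \<Rightarrow> real.
        (\<forall>t\<in>{time_of \<alpha> \<Lambda>in..time_of \<alpha> \<Lambda>1}. M t > 0 \<and>
           (M has_real_derivative (- inverse ((Geff f0 f2 c (exp (- \<alpha> * t)) * M t)\<^sup>2)))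
             (at t within {time_of \<alpha> \<Lambda>in..time_of \<alpha> \<Lambda>1}))
        \<longrightarrow> (\<forall>\<Lambda>\<in>{\<Lambda>1..\<Lambda>in}.
              M (time_of \<alpha> \<Lambda>) =
                root 3 ((M (time_of \<alpha> \<Lambda>in)) ^ 3
                  - 1 / (3 * \<alpha> * pi\<^sup>2) *
                    integral {\<Lambda>..\<Lambda>in} (\<lambda>x. (192 * f2 * x\<^sup>2 - 2 * f0 * c x)\<^sup>2 / x))))
     \<and>
     (\<forall>M :: real \<Rightarrow> real.
        (\<forall>t\<in>{time_of \<alpha> \<Lambda>in..time_of \<alpha> \<Lambda>1}. M t > 0 \<and>
           (M has_real_derivative (- inverse ((GeffH f0 f2 c h (exp (- \<alpha> * t)) * M t)\<^sup>2)))
             (at t within {time_of \<alpha> \<Lambda>in..time_of \<alpha> \<Lambda>1}))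
        \<longrightarrow> (\<forall>\<Lambda>\<in>{\<Lambda>1..\<Lambda>in}.
              M (time_of \<alpha> \<Lambda>) =
                root 3 ((M (time_of \<alpha> \<Lambda>in)) ^ 3
                  - 3 / \<alpha> *
                    integral {\<Lambda>..\<Lambda>in}
                      (\<lambda>x. (1 - 4 * pi / 3 * Geff f0 f2 c x * h x)\<^sup>2 / (x * (Geff f0 f2 c x)\<^sup>2)))))"
proof (intro conjI allI impI ballI)
  fix M :: "real \<Rightarrow> real" and L
  assume der: "\<forall>t\<in>{time_of \<alpha> \<Lambda>in..time_of \<alpha> \<Lambda>1}. M t > 0 \<and>
           (M has_real_derivative (- inverse ((Geff f0 f2 c (exp (- \<alpha> * t)) * M t)\<^sup>2)))
             (at t within {time_of \<alpha> \<Lambda>in..time_of \<alpha> \<Lambda>1})"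
     and L: "L \<in> {\<Lambda>1..\<Lambda>in}"
  show "M (time_of \<alpha> L) =
                root 3 ((M (time_of \<alpha> \<Lambda>in)) ^ 3
                  - 1 / (3 * \<alpha> * pi\<^sup>2) *
                    integral {L..\<Lambda>in} (\<lambda>x. (192 * f2 * x\<^sup>2 - 2 * f0 * c x)\<^sup>2 / x))"
  proof (rule key[where F="\<lambda>x m. - inverse ((Geff f0 f2 c x * m)\<^sup>2)", OF \<alpha> L1 L1in _ der _ L])
    show "continuous_on {\<Lambda>1..\<Lambda>in} (\<lambda>x. (192 * f2 * x\<^sup>2 - 2 * f0 * c x)\<^sup>2 / x)"
      using L1 by (intro continuous_intros c_cont) auto
    show "\<forall>x\<in>{\<Lambda>1..\<Lambda>in}. \<forall>m>0. - inverse ((Geff f0 f2 c x * m)\<^sup>2) =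
       - (1 / (3 * \<alpha> * pi\<^sup>2) * \<alpha> / 3) * ((192 * f2 * x\<^sup>2 - 2 * f0 * c x)\<^sup>2 / x) * x / m\<^sup>2"
    proof (intro ballI allI impI)
      fix x m :: real assume x: "x \<in> {\<Lambda>1..\<Lambda>in}" and m: "m > 0"
      have D: "192 * f2 * x\<^sup>2 - 2 * f0 * c x \<noteq> 0" using c_nz x by auto
      have "x > 0" using x L1 by auto
      then show "- inverse ((Geff f0 f2 c x * m)\<^sup>2) =
       - (1 / (3 * \<alpha> * pi\<^sup>2) * \<alpha> / 3) * ((192 * f2 * x\<^sup>2 - 2 * f0 * c x)\<^sup>2 / x) * x / m\<^sup>2"
        using D m \<alpha> by (simp add: Geff_def field_simps power2_eq_square)
    qed
  qed
next
  fix M :: "real \<Rightarrow> real" and L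
  assume der: "\<forall>t\<in>{time_of \<alpha> \<Lambda>in..time_of \<alpha> \<Lambda>1}. M t > 0 \<and>
           (M has_real_derivative (- inverse ((GeffH f0 f2 c h (exp (- \<alpha> * t)) * M t)\<^sup>2)))
             (at t within {time_of \<alpha> \<Lambda>in..time_of \<alpha> \<Lambda>1})"
     and L: "L \<in> {\<Lambda>1..\<Lambda>in}"
  show "M (time_of \<alpha> L) =
                root 3 ((M (time_of \<alpha> \<Lambda>in)) ^ 3
                  - 3 / \<alpha> *
                    integral {L..\<Lambda>in}
                      (\<lambda>x. (1 - 4 * pi / 3 * Geff f0 f2 c x * h x)\<^sup>2 / (x * (Geff f0 f2 c x)\<^sup>2)))"
  proof (rule key[where F="\<lambda>x m. - inverse ((GeffH f0 f2 c h x * m)\<^sup>2)", OF \<alpha> L1 L1in _ der _ L])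
    have Gc: "continuous_on {\<Lambda>1..\<Lambda>in} (Geff f0 f2 c)"
      unfolding Geff_def using c_nz by (intro continuous_intros c_cont) auto
    have Gnz: "Geff f0 f2 c x \<noteq> 0" if "x \<in> {\<Lambda>1..\<Lambda>in}" for x
      using c_nz that by (simp add: Geff_def)
    show "continuous_on {\<Lambda>1..\<Lambda>in} (\<lambda>x. (1 - 4 * pi / 3 * Geff f0 f2 c x * h x)\<^sup>2 / (x * (Geff f0 f2 c x)\<^sup>2))"
      using L1 Gnz by (intro continuous_intros Gc h_cont) auto
    show "\<forall>x\<in>{\<Lambda>1..\<Lambda>in}. \<forall>m>0. - inverse ((GeffH f0 f2 c h x * m)\<^sup>2) =
       - (3 / \<alpha> * \<alpha> / 3) * ((1 - 4 * pi / 3 * Geff f0 f2 c x * h x)\<^sup>2 / (x * (Geff f0 f2 c x)\<^sup>2)) * x / m\<^sup>2"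
    proof (intro ballI allI impI)
      fix x m :: real assume x: "x \<in> {\<Lambda>1..\<Lambda>in}" and m: "m > 0"
      have G: "Geff f0 f2 c x \<noteq> 0" using Gnz x by auto
      have H: "1 - 4 * pi / 3 * Geff f0 f2 c x * h x \<noteq> 0" using h_nz x by auto
      have "x > 0" using x L1 by auto
      then show "- inverse ((GeffH f0 f2 c h x * m)\<^sup>2) =
       - (3 / \<alpha> * \<alpha> / 3) * ((1 - 4 * pi / 3 * Geff f0 f2 c x * h x)\<^sup>2 / (x * (Geff f0 f2 c x)\<^sup>2)) * x / m\<^sup>2"
        using G H m \<alpha> unfolding GeffH_def by (simp add: field_simps power2_eq_square)
    qed
  qed
qed

end
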